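(* Let $\ell\ge 4$, $s\ge 0$, $r\ge 2$ be integers. There is a constant $c=c(\ell,s,r)$ such that for every $n$ and every $n$-vertex $B(\ell,s)$-free graph $G$, the number of $r$-element subsets of $V(G)$ having more than $\ell+s$ common neighbors in $G$ is at most $cn$.
   Context: The broom $B(\ell,s)$ is the graph obtained from a path on $\ell$ vertices by adding $s$ new vertices, each joined only to a penultimate vertex of the path (a neighbor of an endpoint). A common neighbor of a vertex set $X$ is a vertex adjacent to every vertex of $X$. *)

theory Defs
  imports Complex_Main
begin

definition simple_graph :: "'a set \<Rightarrow> ('a \<Rightarrow> 'a \<Rightarrow> bool) \<Rightarrow> bool" where
  "simple_graph V E \<longleftrightarrow> finite V \<and> (\<forall>x y. E x y \<longrightarrow> x \<in> V \<and> y \<in> V)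
     \<and> (\<forall>x y. E x y \<longrightarrow> E y x) \<and> (\<forall>x. \<not> E x x)"

text \<open>The broom B(l,s) on vertex set {0..<l+s}: path 0 - 1 - ... - (l-1), and
  leaves l, ..., l+s-1 each joined to the penultimate path vertex l-2.\<close>
definition broom_edge :: "nat \<Rightarrow> nat \<Rightarrow> nat \<Rightarrow> nat \<Rightarrow> bool" where
  "broom_edge l s i j \<longleftrightarrow>
     (i + 1 = j \<and> j < l) \<or> (j + 1 = i \<and> i < l) \<or>
     (i = l - 2 \<and> l \<le> j \<and> j < l + s) \<or> (j = l - 2 \<and> l \<le> i \<and> i < l + s)"

definition contains_broom :: "'a set \<Rightarrow> ('a \<Rightarrow> 'a \<Rightarrow> bool) \<Rightarrow> nat \<Rightarrow> nat \<Rightarrow> bool" where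
  "contains_broom V E l s \<longleftrightarrow>
     (\<exists>f. inj_on f {0..<l+s} \<and> f ` {0..<l+s} \<subseteq> V \<and>
          (\<forall>i<l+s. \<forall>j<l+s. broom_edge l s i j \<longrightarrow> E (f i) (f j)))"

definition broom_free :: "'a set \<Rightarrow> ('a \<Rightarrow> 'a \<Rightarrow> bool) \<Rightarrow> nat \<Rightarrow> nat \<Rightarrow> bool" where
  "broom_free V E l s \<longleftrightarrow> \<not> contains_broom V E l s"

definition common_nbrs :: "'a set \<Rightarrow> ('a \<Rightarrow> 'a \<Rightarrow> bool) \<Rightarrow> 'a set \<Rightarrow> 'a set" where
  "common_nbrs V E X = {v \<in> V. \<forall>x\<in>X. E x v}"

end

theory Submission
  imports Defs
begin

definition nb :: "'a set \<Rightarrow> ('a \<Rightarrow> 'a \<Rightarrow> bool) \<Rightarrow> 'a \<Rightarrow> 'a set" where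
  "nb V E v = {u \<in> V. E v u}"

lemma path_ex:
  assumes sg: "simple_graph V E" and deg: "\<forall>u\<in>V. card (nb V E u) \<ge> D" and v: "v \<in> V"
  shows "k < D \<Longrightarrow> \<exists>ps. length ps = Suc k \<and> distinct ps \<and> ps!0 = v \<and> set ps \<subseteq> V \<and>
           (\<forall>i. Suc i < length ps \<longrightarrow> E (ps!i) (ps!Suc i))"
proof (induction k)
  case 0
  then show ?case using v by (intro exI[of _ "[v]"]) auto
next
  case (Suc k)
  then obtain ps where ps: "length ps = Suc k" "distinct ps" "ps!0 = v" "set ps \<subseteq> V"
     "\<forall>i. Suc i < length ps \<longrightarrow> E (ps!i) (ps!Suc i)" by auto
  define w where "w = ps ! k"
  have wV: "w \<in> V" using ps w_def by (metis lessI nth_mem subsetD)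
  have fin: "finite V" using sg unfolding simple_graph_def by auto
  have "card (nb V E w) \<ge> D" using deg wV by auto
  moreover have "card (set ps) = Suc k" using ps distinct_card by metis
  ultimately have "card (set ps) < card (nb V E w)" using Suc.prems by auto
  hence "\<not> nb V E w \<subseteq> set ps" using card_mono by fastforce
  then obtain u where u: "u \<in> nb V E w" "u \<notin> set ps" by auto
  have uV: "u \<in> V" "E w u" using u unfolding nb_def by auto
  show ?case
  proof (intro exI[of _ "ps @ [u]"] conjI allI impI)
    fix i assume i: "Suc i < length (ps @ [u])"
    show "E ((ps @ [u]) ! i) ((ps @ [u]) ! Suc i)"
    proof (cases "Suc i < length ps")
      case True
      then show ?thesis using ps(5) by (simp add: nth_append)
    next
      case False
      then have "i = k" using i ps(1) by simp
      then show ?thesis using uV ps(1) w_def by (simp add: nth_append)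
    qed
  qed (use ps u uV in \<open>auto simp: nth_append\<close>)
qed

lemma broom_ex:
  assumes sg: "simple_graph V E" and deg: "\<forall>u\<in>V. card (nb V E u) \<ge> l + s + 1"
    and ne: "V \<noteq> {}" and l: "l \<ge> 4"
  shows "contains_broom V E l s"
proof -
  obtain v where v: "v \<in> V" using ne by auto
  have symE: "\<And>x y. E x y \<Longrightarrow> E y x" using sg unfolding simple_graph_def by auto
  have fin: "finite V" using sg unfolding simple_graph_def by auto
  have lt: "l - 2 < l + s + 1" by simp
  obtain ps where ps: "length ps = Suc (l - 2)" "distinct ps" "ps!0 = v" "set ps \<subseteq> V"
     "\<forall>i. Suc i < length ps \<longrightarrow> E (ps!i) (ps!Suc i)"
    using path_ex[OF sg deg v lt] by blast
  define S where "S = nb V E v - set ps"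
  have "card (nb V E v) \<ge> l + s + 1" using deg v by auto
  moreover have "card (set ps) = l - 1" using distinct_card[OF ps(2)] ps(1) l by simp
  ultimately have "card S \<ge> s + 1" unfolding S_def
    using diff_card_le_card_Diff[of "set ps" "nb V E v"] by auto
  then obtain T where T: "T \<subseteq> S" "card T = s + 1" "finite T"
    by (meson obtain_subset_with_card_n)
  obtain ls where ls: "set ls = T" "distinct ls" using finite_distinct_list[OF T(3)] by auto
  have lsl: "length ls = s + 1" using ls T distinct_card by metis
  define xs where "xs = rev ps @ ls"
  have dxs: "distinct xs" unfolding xs_def using ps ls T S_def by auto
  have lxs: "length xs = l + s" unfolding xs_def using ps lsl l by auto
  have f1: "\<And>i. i < l - 1 \<Longrightarrow> xs ! i = ps ! (l - 2 - i)"
  proof -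
    fix i assume i: "i < l - 1"
    have ps1: "length ps = l - 1" using ps(1) l by simp
    show "xs ! i = ps ! (l - 2 - i)" unfolding xs_def using ps1 i by (simp add: nth_append rev_nth)
  qed
  have f2: "\<And>j. l - 1 \<le> j \<Longrightarrow> j < l + s \<Longrightarrow> E v (xs ! j)"
  proof -
    fix j assume j: "l - 1 \<le> j" "j < l + s"
    have ps1: "length ps = l - 1" using ps(1) l by simp
    have "xs ! j = ls ! (j - (l - 1))" unfolding xs_def using ps1 j by (simp add: nth_append)
    moreover have "j - (l - 1) < length ls" using lsl j l by simp
    hence "ls ! (j - (l - 1)) \<in> T" using ls nth_mem by metis
    ultimately show "E v (xs ! j)" using T unfolding S_def nb_def by auto
  qed
  have f3: "xs ! (l - 2) = v" using f1[of "l-2"] l ps(3) by auto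
  have f4: "\<And>i. i < l - 2 \<Longrightarrow> E (xs ! i) (xs ! Suc i)"
  proof -
    fix i assume i: "i < l - 2"
    have "E (ps ! (l - 3 - i)) (ps ! Suc (l - 3 - i))" using ps(1,5) i by auto
    moreover have "Suc (l - 3 - i) = l - 2 - i" using i by auto
    moreover have "xs ! i = ps ! Suc (l - 3 - i)" using f1[of i] i by (simp add: Suc_diff_Suc numeral_3_eq_3)
    moreover have "xs ! Suc i = ps ! (l - 3 - i)" using f1[of "Suc i"] i by (simp add: numeral_3_eq_3)
    ultimately show "E (xs ! i) (xs ! Suc i)" using symE by auto
  qed
  show ?thesis unfolding contains_broom_def
  proof (intro exI[of _ "nth xs"] conjI allI impI)
    show "inj_on (nth xs) {0..<l + s}" using dxs lxs by (intro inj_on_nth) auto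
    have sx: "set xs \<subseteq> V" unfolding xs_def using ps(4) ls T unfolding S_def nb_def by auto
    show "nth xs ` {0..<l + s} \<subseteq> V" using sx lxs nth_mem by fastforce
  next
    fix i j assume ij: "i < l + s" "j < l + s" "broom_edge l s i j"
    have key: "E (xs ! i) (xs ! j)" if "i + 1 = j" "j < l" for i j
    proof (cases "j \<le> l - 2")
      case True then show ?thesis using f4[of i] that by auto
    next
      case False then have "i = l - 2" "j = l - 1" using that by auto
      then show ?thesis using f3 f2[of j] l by auto
    qed
    have key2: "E (xs ! i) (xs ! j)" if "i = l - 2" "l \<le> j" "j < l + s" for i j
      using f3 f2[of j] that by auto
    from ij(3) show "E (xs ! i) (xs ! j)" unfolding broom_edge_def
      using key key2 symE ij by blast
  qed
qed

lemma min_deg: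
  assumes sg: "simple_graph V E" and bf: "broom_free V E l s" and ne: "V \<noteq> {}" and l: "l \<ge> 4"
  shows "\<exists>v\<in>V. card (nb V E v) \<le> l + s"
proof (rule ccontr)
  assume "\<not> ?thesis"
  hence "\<forall>u\<in>V. card (nb V E u) \<ge> l + s + 1" by force
  hence "contains_broom V E l s" using broom_ex sg ne l by blast
  thus False using bf unfolding broom_free_def by auto
qed

lemma count_bound:
  fixes l s r :: nat
  assumes l: "l \<ge> 4" and r: "r \<ge> 2"
  shows "\<forall>(V::'a set) E. card V = n \<longrightarrow> simple_graph V E \<and> broom_free V E l s \<longrightarrow>
           card {X. X \<subseteq> V \<and> card X = r \<and> card (common_nbrs V E X) > l + s} \<le> 2^(l+s) * card V"
proof (induction n)
  case 0
  show ?case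
  proof (intro allI impI)
    fix V :: "'a set" and E assume "card V = 0" "simple_graph V E \<and> broom_free V E l s"
    hence "V = {}" unfolding simple_graph_def by auto
    hence e: "{X. X \<subseteq> V \<and> card X = r \<and> card (common_nbrs V E X) > l + s} = {}" using r by auto
    show "card {X. X \<subseteq> V \<and> card X = r \<and> card (common_nbrs V E X) > l + s} \<le> 2^(l+s) * card V" using e by (metis card.empty zero_le)
  qed
next
  case (Suc n)
  show ?case
  proof (intro allI impI)
    fix V :: "'a set" and E assume cV: "card V = Suc n" and h: "simple_graph V E \<and> broom_free V E l s"
    have sg: "simple_graph V E" and bf: "broom_free V E l s" using h by auto
    have fin: "finite V" and symE: "\<And>x y. E x y \<Longrightarrow> E y x" and inV: "\<And>x y. E x y \<Longrightarrow> x \<in> V \<and> y \<in> V"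
      using sg unfolding simple_graph_def by auto
    have ne: "V \<noteq> {}" using cV by auto
    obtain v where v: "v \<in> V" "card (nb V E v) \<le> l + s" using min_deg[OF sg bf ne l] by auto
    define V' where "V' = V - {v}"
    define E' where "E' = (\<lambda>x y. E x y \<and> x \<noteq> v \<and> y \<noteq> v)"
    have sg': "simple_graph V' E'" using sg unfolding simple_graph_def V'_def E'_def by auto
    have bf': "broom_free V' E' l s" unfolding broom_free_def
    proof
      assume "contains_broom V' E' l s"
      then obtain f where f: "inj_on f {0..<l+s}" "f ` {0..<l+s} \<subseteq> V'"
        "\<forall>i<l+s. \<forall>j<l+s. broom_edge l s i j \<longrightarrow> E' (f i) (f j)"
        unfolding contains_broom_def by blast
      have "f ` {0..<l+s} \<subseteq> V" using f(2) unfolding V'_def by blast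
      moreover have "\<forall>i<l+s. \<forall>j<l+s. broom_edge l s i j \<longrightarrow> E (f i) (f j)"
        using f(3) unfolding E'_def by blast
      ultimately have "contains_broom V E l s" using f(1) unfolding contains_broom_def by blast
      thus False using bf unfolding broom_free_def by simp
    qed
    have cV': "card V' = n" using cV v fin unfolding V'_def by auto
    let ?C = "\<lambda>V E. {X. X \<subseteq> V \<and> card X = r \<and> card (common_nbrs V E X) > l + s}"
    have IH: "card (?C V' E') \<le> 2^(l+s) * n" using Suc.IH sg' bf' cV' by auto
    have sub: "?C V E \<subseteq> ?C V' E' \<union> {X. X \<subseteq> nb V E v \<and> card X = r}"
    proof
      fix X assume X: "X \<in> ?C V E"
      show "X \<in> ?C V' E' \<union> {X. X \<subseteq> nb V E v \<and> card X = r}"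
      proof (cases "v \<in> common_nbrs V E X")
        case True
        hence "X \<subseteq> nb V E v" using X inV symE unfolding common_nbrs_def nb_def by blast
        thus ?thesis using X by auto
      next
        case False
        have vX: "v \<notin> X"
        proof
          assume "v \<in> X"
          hence "common_nbrs V E X \<subseteq> nb V E v" unfolding common_nbrs_def nb_def by auto
          hence "card (common_nbrs V E X) \<le> card (nb V E v)"
            using fin by (intro card_mono) (auto simp: nb_def)
          thus False using X v by auto
        qed
        have "common_nbrs V' E' X = common_nbrs V E X"
          using False vX unfolding common_nbrs_def V'_def E'_def by auto
        moreover have "X \<subseteq> V'" using X vX unfolding V'_def by auto
        ultimately show ?thesis using X by auto
      qed
    qed
    have finC: "finite (?C V' E')" using fin unfolding V'_def
      by (rule finite_subset[rotated, OF finite_Pow_iff[THEN iffD2]]) auto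
    have finN: "finite (nb V E v)" using fin by (auto simp: nb_def)
    have "card {X. X \<subseteq> nb V E v \<and> card X = r} = card (nb V E v) choose r"
      using n_subsets[OF finN] by simp
    also have "\<dots> \<le> 2 ^ card (nb V E v)" by (rule binomial_le_pow2)
    also have "\<dots> \<le> 2 ^ (l + s)" using v(2) by (intro power_increasing) auto
    finally have b2: "card {X. X \<subseteq> nb V E v \<and> card X = r} \<le> 2 ^ (l + s)" .
    have finS: "finite {X. X \<subseteq> nb V E v \<and> card X = r}" using finN
      by (rule finite_subset[rotated, OF finite_Pow_iff[THEN iffD2]]) auto
    have "card (?C V E) \<le> card (?C V' E' \<union> {X. X \<subseteq> nb V E v \<and> card X = r})"
      using sub finC finS by (intro card_mono) auto
    also have "\<dots> \<le> card (?C V' E') + card {X. X \<subseteq> nb V E v \<and> card X = r}" by (rule card_Un_le)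
    also have "\<dots> \<le> 2^(l+s) * n + 2^(l+s)" using IH b2 by linarith
    also have "\<dots> = 2^(l+s) * card V" using cV by simp
    finally show "card (?C V E) \<le> 2^(l+s) * card V" .
  qed
qed

theorem mainTheorem4:
  fixes l s r :: nat
  assumes "l \<ge> 4" and "r \<ge> 2"
  shows "\<exists>c::real. \<forall>(V::nat set) E.
           simple_graph V E \<and> broom_free V E l s \<longrightarrow>
           real (card {X. X \<subseteq> V \<and> card X = r \<and> card (common_nbrs V E X) > l + s})
             \<le> c * real (card V)"
proof (intro exI[of _ "2^(l+s)"] allI impI)
  fix V :: "nat set" and E assume h: "simple_graph V E \<and> broom_free V E l s"
  have "card {X. X \<subseteq> V \<and> card X = r \<and> card (common_nbrs V E X) > l + s} \<le> 2^(l+s) * card V"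
    using count_bound[OF assms, of "card V"] h by blast
  hence "real (card {X. X \<subseteq> V \<and> card X = r \<and> card (common_nbrs V E X) > l + s}) \<le> real (2^(l+s) * card V)"
    by (simp only: of_nat_le_iff)
  thus "real (card {X. X \<subseteq> V \<and> card X = r \<and> card (common_nbrs V E X) > l + s}) \<le> 2^(l+s) * real (card V)"
    by simp
qed

end
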